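(* Let $\Lambda\in\{\mathsf{CS4},\mathsf{IS4},\mathsf{S4I},\mathsf{GS4}\}$ and let $\varphi$ be a formula. (1) If $\Lambda\neq\mathsf{S4I}$ and $\varphi$ is satisfiable (resp. falsifiable) in a shallow $\Lambda$-model, then $\varphi$ is satisfiable (resp. falsifiable) in a $\Lambda$-model with finitely many worlds. (2) If $\Lambda=\mathsf{S4I}$ and $\varphi$ is satisfiable (resp. falsifiable) in a shallow, forest-like $\mathsf{S4I}$-model, then $\varphi$ is satisfiable (resp. falsifiable) in an $\mathsf{S4I}$-model with finitely many worlds.
   Context: Formulas over a countably infinite set $\mathbb P$ of variables: $p\mid\bot\mid\varphi\wedge\psi\mid\varphi\vee\psi\mid\varphi\to\psi\mid\Diamond\varphi\mid\Box\varphi$. A bi-intuitionistic frame is $(W,W_\bot,\preccurlyeq,\sqsubseteq)$ with $\preccurlyeq,\sqsubseteq$ preorders on $W$ and $W_\bot\subseteq W$ upward closed under both; infallible if $W_\bot=\varnothing$. A valuation $V:\mathbb P\to 2^W$ has each $V(p)$ upward closed under $\preccurlyeq$ and containing $W_\bot$; a model is $\mathcal M=(W,W_\bot,\preccurlyeq,\sqsubseteq,V)$. Satisfaction: $p$ iff $w\in V(p)$; $\bot$ iff $w\in W_\bot$; $\wedge,\vee$ pointwise; $w\models\varphi\to\psi$ iff for all $v\succcurlyeq w$, $v\models\varphi$ implies $v\models\psi$; $w\models\Diamond\varphi$ iff for all $u\succcurlyeq w$ there is $v\sqsupseteq u$ with $v\models\varphi$; $w\models\Box\varphi$ iff $v\models\varphi$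 whenever $w\preccurlyeq u\sqsubseteq v$. $\varphi$ is satisfiable (falsifiable) in $\mathcal M$ if $(\mathcal M,w)\models\varphi$ (resp. $\not\models$) for some $w\in W\setminus W_\bot$. $\sqsubseteq$ is forward confluent if $w\preccurlyeq w'$, $w\sqsubseteq v$ imply some $v'$ with $v\preccurlyeq v'$, $w'\sqsubseteq v'$; backward confluent if $w\sqsubseteq v\preccurlyeq v'$ implies some $w'$ with $w\preccurlyeq w'\sqsubseteq v'$; downward confluent if $w\preccurlyeq v\sqsubseteq v'$ implies some $w'$ with $w\sqsubseteq w'\preccurlyeq v'$. Locally linear: $w\preccurlyeq u$, $w\preccurlyeq v$ imply $u\preccurlyeq v$ or $v\preccurlyeq u$. $\mathsf{CS4}$-frames: backward confluent. $\mathsf{IS4}$-frames: infallible, forward and backward confluent. $\mathsf{GS4}$-frames: locally linear $\mathsf{IS4}$-frames. $\mathsf{S4I}$-frames: infallible, forward and downward confluent. A $\Lambda$-model is a model on a $\Lambda$-frame. Write $w\prec v$ if $w\preccurlyeq v$ and $v\not\preccurlyeq w$. The height of $w$ is the supremum of all $n$ for which there is a chain $w=w_0\prec w_1\prec\cdots\prec w_n$; the height of the model is the supremum of the heights of its worlds; the model is shallow if its height is finite. The model is forest-like if for every $w\in W$ the set $\{v\in W: v\preccurlyeq w\}$ is totally ordered by $\preccurlyeq$. *)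

theory Defs
  imports Main "HOL-Library.Extended_Nat"
begin

datatype fm = Var nat | Bot | And fm fm | Or fm fm | Imp fm fm | Dia fm | Box fm

text \<open>Models: worlds W, fallible worlds Wb, intuitionistic preorder le, modal preorder sq, valuation.\<close>
record 'w model =
  worlds :: "'w set"
  fallible :: "'w set"
  leq :: "'w \<Rightarrow> 'w \<Rightarrow> bool"
  sqq :: "'w \<Rightarrow> 'w \<Rightarrow> bool"
  val :: "nat \<Rightarrow> 'w set"

definition preorder_on :: "'w set \<Rightarrow> ('w \<Rightarrow> 'w \<Rightarrow> bool) \<Rightarrow> bool" where
  "preorder_on A R \<longleftrightarrow> (\<forall>x y. R x y \<longrightarrow> x \<in> A \<and> y \<in> A)
     \<and> (\<forall>x\<in>A. R x x) \<and> (\<forall>x\<in>A. \<forall>y\<in>A. \<forall>z\<in>A. R x y \<longrightarrow> R y z \<longrightarrow> R x z)"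

definition up_closed :: "'w set \<Rightarrow> ('w \<Rightarrow> 'w \<Rightarrow> bool) \<Rightarrow> 'w set \<Rightarrow> bool" where
  "up_closed A R U \<longleftrightarrow> (\<forall>x\<in>U. \<forall>y\<in>A. R x y \<longrightarrow> y \<in> U)"

definition is_model :: "'w model \<Rightarrow> bool" where
  "is_model M \<longleftrightarrow>
     preorder_on (worlds M) (leq M) \<and> preorder_on (worlds M) (sqq M) \<and>
     fallible M \<subseteq> worlds M \<and>
     up_closed (worlds M) (leq M) (fallible M) \<and> up_closed (worlds M) (sqq M) (fallible M) \<and>
     (\<forall>p. val M p \<subseteq> worlds M \<and> up_closed (worlds M) (leq M) (val M p) \<and> fallible M \<subseteq> val M p)"

fun sat :: "'w model \<Rightarrow> 'w \<Rightarrow> fm \<Rightarrow> bool" where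
  "sat M w (Var p) \<longleftrightarrow> w \<in> val M p"
| "sat M w Bot \<longleftrightarrow> w \<in> fallible M"
| "sat M w (And a b) \<longleftrightarrow> sat M w a \<and> sat M w b"
| "sat M w (Or a b) \<longleftrightarrow> sat M w a \<or> sat M w b"
| "sat M w (Imp a b) \<longleftrightarrow> (\<forall>v\<in>worlds M. leq M w v \<longrightarrow> sat M v a \<longrightarrow> sat M v b)"
| "sat M w (Dia a) \<longleftrightarrow> (\<forall>u\<in>worlds M. leq M w u \<longrightarrow> (\<exists>v\<in>worlds M. sqq M u v \<and> sat M v a))"
| "sat M w (Box a) \<longleftrightarrow> (\<forall>u\<in>worlds M. \<forall>v\<in>worlds M. leq M w u \<longrightarrow> sqq M u v \<longrightarrow> sat M v a)"

definition satisfiable_in :: "'w model \<Rightarrow> fm \<Rightarrow> bool" where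
  "satisfiable_in M \<phi> \<longleftrightarrow> (\<exists>w \<in> worlds M - fallible M. sat M w \<phi>)"

definition falsifiable_in :: "'w model \<Rightarrow> fm \<Rightarrow> bool" where
  "falsifiable_in M \<phi> \<longleftrightarrow> (\<exists>w \<in> worlds M - fallible M. \<not> sat M w \<phi>)"

definition infallible :: "'w model \<Rightarrow> bool" where
  "infallible M \<longleftrightarrow> fallible M = {}"

definition forward_confluent :: "'w model \<Rightarrow> bool" where
  "forward_confluent M \<longleftrightarrow> (\<forall>w\<in>worlds M. \<forall>w'\<in>worlds M. \<forall>v\<in>worlds M.
     leq M w w' \<longrightarrow> sqq M w v \<longrightarrow> (\<exists>v'\<in>worlds M. leq M v v' \<and> sqq M w' v'))"

definition backward_confluent :: "'w model \<Rightarrow> bool" where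
  "backward_confluent M \<longleftrightarrow> (\<forall>w\<in>worlds M. \<forall>v\<in>worlds M. \<forall>v'\<in>worlds M.
     sqq M w v \<longrightarrow> leq M v v' \<longrightarrow> (\<exists>w'\<in>worlds M. leq M w w' \<and> sqq M w' v'))"

definition downward_confluent :: "'w model \<Rightarrow> bool" where
  "downward_confluent M \<longleftrightarrow> (\<forall>w\<in>worlds M. \<forall>v\<in>worlds M. \<forall>v'\<in>worlds M.
     leq M w v \<longrightarrow> sqq M v v' \<longrightarrow> (\<exists>w'\<in>worlds M. sqq M w w' \<and> leq M w' v'))"

definition locally_linear :: "'w model \<Rightarrow> bool" where
  "locally_linear M \<longleftrightarrow> (\<forall>w\<in>worlds M. \<forall>u\<in>worlds M. \<forall>v\<in>worlds M.
     leq M w u \<longrightarrow> leq M w v \<longrightarrow> leq M u v \<or> leq M v u)"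

datatype logic = CS4 | IS4 | S4I | GS4

fun logic_model :: "logic \<Rightarrow> 'w model \<Rightarrow> bool" where
  "logic_model CS4 M \<longleftrightarrow> is_model M \<and> backward_confluent M"
| "logic_model IS4 M \<longleftrightarrow> is_model M \<and> infallible M \<and> forward_confluent M \<and> backward_confluent M"
| "logic_model GS4 M \<longleftrightarrow> is_model M \<and> infallible M \<and> forward_confluent M \<and> backward_confluent M
                          \<and> locally_linear M"
| "logic_model S4I M \<longleftrightarrow> is_model M \<and> infallible M \<and> forward_confluent M \<and> downward_confluent M"

definition strict_le :: "'w model \<Rightarrow> 'w \<Rightarrow> 'w \<Rightarrow> bool" where
  "strict_le M w v \<longleftrightarrow> leq M w v \<and> \<not> leq M v w"

definition has_chain :: "'w model \<Rightarrow> 'w \<Rightarrow> nat \<Rightarrow> bool" where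
  "has_chain M w n \<longleftrightarrow> (\<exists>f :: nat \<Rightarrow> 'w. f 0 = w \<and> (\<forall>i\<le>n. f i \<in> worlds M)
       \<and> (\<forall>i<n. strict_le M (f i) (f (Suc i))))"

definition world_height :: "'w model \<Rightarrow> 'w \<Rightarrow> enat" where
  "world_height M w = (SUP n \<in> {n. has_chain M w n}. enat n)"

definition model_height :: "'w model \<Rightarrow> enat" where
  "model_height M = (SUP w \<in> worlds M. world_height M w)"

definition shallow :: "'w model \<Rightarrow> bool" where
  "shallow M \<longleftrightarrow> model_height M \<noteq> \<infinity>"

definition forest_like :: "'w model \<Rightarrow> bool" where
  "forest_like M \<longleftrightarrow> (\<forall>w\<in>worlds M. \<forall>u\<in>worlds M. \<forall>v\<in>worlds M.
     leq M u w \<longrightarrow> leq M v w \<longrightarrow> leq M u v \<or> leq M v u)"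

end

theory Submission
  imports Defs
begin



lemma modD:
  assumes "is_model M"
  shows "preorder_on (worlds M) (leq M)" "preorder_on (worlds M) (sqq M)"
    "fallible M \<subseteq> worlds M" "up_closed (worlds M) (leq M) (fallible M)"
    "up_closed (worlds M) (sqq M) (fallible M)" "val M p \<subseteq> worlds M"
    "up_closed (worlds M) (leq M) (val M p)" "fallible M \<subseteq> val M p"
  using assms unfolding is_model_def by simp_all

lemma preD:
  assumes "preorder_on A R"
  shows "R x y \<Longrightarrow> x \<in> A" "R x y \<Longrightarrow> y \<in> A" "x \<in> A \<Longrightarrow> R x x"
    "R x y \<Longrightarrow> R y z \<Longrightarrow> R x z"
  using assms unfolding preorder_on_def by metis+

lemma upD: "up_closed A R U \<Longrightarrow> x \<in> U \<Longrightarrow> y \<in> A \<Longrightarrow> R x y \<Longrightarrow> y \<in> U"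
  unfolding up_closed_def by blast

lemma mod_leqW: "is_model M \<Longrightarrow> leq M w v \<Longrightarrow> w \<in> worlds M \<and> v \<in> worlds M"
  using preD(1,2)[OF modD(1)] by metis
lemma mod_sqqW: "is_model M \<Longrightarrow> sqq M w v \<Longrightarrow> w \<in> worlds M \<and> v \<in> worlds M"
  using preD(1,2)[OF modD(2)] by metis
lemma mod_leq_refl: "is_model M \<Longrightarrow> w \<in> worlds M \<Longrightarrow> leq M w w"
  using preD(3)[OF modD(1)] by metis
lemma mod_sqq_refl: "is_model M \<Longrightarrow> w \<in> worlds M \<Longrightarrow> sqq M w w"
  using preD(3)[OF modD(2)] by metis
lemma mod_leq_trans: "is_model M \<Longrightarrow> leq M u w \<Longrightarrow> leq M w v \<Longrightarrow> leq M u v"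
  using preD(4)[OF modD(1)] by metis
lemma mod_sqq_trans: "is_model M \<Longrightarrow> sqq M u w \<Longrightarrow> sqq M w v \<Longrightarrow> sqq M u v"
  using preD(4)[OF modD(2)] by metis
lemma mod_fallW: "is_model M \<Longrightarrow> fallible M \<subseteq> worlds M"
  using modD(3) by metis
lemma mod_fall_leq: "is_model M \<Longrightarrow> w \<in> fallible M \<Longrightarrow> leq M w v \<Longrightarrow> v \<in> fallible M"
  using upD[OF modD(4)] mod_leqW by metis
lemma mod_fall_sqq: "is_model M \<Longrightarrow> w \<in> fallible M \<Longrightarrow> sqq M w v \<Longrightarrow> v \<in> fallible M"
  using upD[OF modD(5)] mod_sqqW by metis
lemma mod_valW: "is_model M \<Longrightarrow> val M p \<subseteq> worlds M"
  using modD(6) by metis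
lemma mod_val_leq: "is_model M \<Longrightarrow> w \<in> val M p \<Longrightarrow> leq M w v \<Longrightarrow> v \<in> val M p"
  using upD[OF modD(7)] mod_leqW by metis
lemma mod_fall_val: "is_model M \<Longrightarrow> fallible M \<subseteq> val M p"
  using modD(8) by metis

lemma persist: "is_model M \<Longrightarrow> leq M w v \<Longrightarrow> sat M w \<psi> \<Longrightarrow> sat M v \<psi>"
proof (induction \<psi> arbitrary: w v)
  case (Var x) then show ?case using mod_val_leq by (metis sat.simps(1))
next
  case Bot then show ?case using mod_fall_leq by (metis sat.simps(2))
next
  case (And a b) then show ?case by simp
next
  case (Or a b) then show ?case by (metis sat.simps(4))
next
  case (Imp a b)
  have T: "\<And>u. leq M v u \<Longrightarrow> leq M w u" using mod_leq_trans[of M w v] Imp.prems(1,2) by blast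
  show ?case unfolding sat.simps
  proof (intro ballI impI)
    fix u assume "u \<in> worlds M" "leq M v u" "sat M u a"
    then show "sat M u b" using T Imp.prems(3) unfolding sat.simps by blast
  qed
next
  case (Dia a)
  have T: "\<And>u. leq M v u \<Longrightarrow> leq M w u" using mod_leq_trans[of M w v] Dia.prems(1,2) by blast
  show ?case unfolding sat.simps
  proof (intro ballI impI)
    fix u assume "u \<in> worlds M" "leq M v u"
    then show "\<exists>x\<in>worlds M. sqq M u x \<and> sat M x a" using T Dia.prems(3) unfolding sat.simps by blast
  qed
next
  case (Box a)
  have T: "\<And>u. leq M v u \<Longrightarrow> leq M w u" using mod_leq_trans[of M w v] Box.prems(1,2) by blast
  show ?case unfolding sat.simps
  proof (intro ballI impI)
    fix u x assume "u \<in> worlds M" "x \<in> worlds M" "leq M v u" "sqq M u x"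
    then show "sat M x a" using T Box.prems(3) unfolding sat.simps by blast
  qed
qed

fun subs :: "fm \<Rightarrow> fm set" where
  "subs (Var p) = {Var p}"
| "subs Bot = {Bot}"
| "subs (And a b) = insert (And a b) (subs a \<union> subs b)"
| "subs (Or a b) = insert (Or a b) (subs a \<union> subs b)"
| "subs (Imp a b) = insert (Imp a b) (subs a \<union> subs b)"
| "subs (Dia a) = insert (Dia a) (subs a)"
| "subs (Box a) = insert (Box a) (subs a)"

lemma subs_self: "\<phi> \<in> subs \<phi>" by (cases \<phi>) auto
lemma subs_fin: "finite (subs \<phi>)" by (induction \<phi>) auto
lemma subs_trans: "\<psi> \<in> subs \<phi> \<Longrightarrow> subs \<psi> \<subseteq> subs \<phi>"
  by (induction \<phi>) auto





locale base =
  fixes M :: "'w model" and S :: "fm set"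
  assumes model: "is_model M" and finS: "finite S" and botS: "Bot \<in> S"
  and clA: "And a b \<in> S \<Longrightarrow> a \<in> S \<and> b \<in> S"
  and clO: "Or a b \<in> S \<Longrightarrow> a \<in> S \<and> b \<in> S"
  and clI: "Imp a b \<in> S \<Longrightarrow> a \<in> S \<and> b \<in> S"
  and clD: "Dia a \<in> S \<Longrightarrow> a \<in> S"
  and clB: "Box a \<in> S \<Longrightarrow> a \<in> S"
begin
definition Bm where "Bm w a \<longleftrightarrow> (\<forall>v\<in>worlds M. sqq M w v \<longrightarrow> sat M v a)"
definition Pm where "Pm w a \<longleftrightarrow> (\<exists>v\<in>worlds M. sqq M w v \<and> sat M v a)"
definition lab where "lab w = ({a\<in>S. sat M w a}, {a\<in>S. Bm w a}, {a\<in>S. Pm w a})"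

lemma lab_sat: "lab w = lab v \<Longrightarrow> a \<in> S \<Longrightarrow> sat M w a \<longleftrightarrow> sat M v a"
  unfolding lab_def by (simp add: set_eq_iff) blast
lemma lab_B: "lab w = lab v \<Longrightarrow> a \<in> S \<Longrightarrow> Bm w a \<longleftrightarrow> Bm v a"
  unfolding lab_def by (simp add: set_eq_iff) blast
lemma lab_P: "lab w = lab v \<Longrightarrow> a \<in> S \<Longrightarrow> Pm w a \<longleftrightarrow> Pm v a"
  unfolding lab_def by (simp add: set_eq_iff) blast
lemma lab_fall: "lab w = lab v \<Longrightarrow> w \<in> fallible M \<longleftrightarrow> v \<in> fallible M"
  using lab_sat[of w v Bot] botS by simp
lemma finite_lab: "finite (lab ` X)"
proof -
  have "lab ` X \<subseteq> Pow S \<times> Pow S \<times> Pow S" unfolding lab_def by auto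
  then show ?thesis using finS by (simp add: finite_subset)
qed
end

locale quot = base M S for M :: "'w model" and S +
  fixes d :: "'w \<Rightarrow> 'q"
  assumes d_lab: "w \<in> worlds M \<Longrightarrow> v \<in> worlds M \<Longrightarrow> d w = d v \<Longrightarrow> lab w = lab v"
  and zig: "w \<in> worlds M \<Longrightarrow> v \<in> worlds M \<Longrightarrow> d w = d v \<Longrightarrow> leq M w x \<Longrightarrow> \<exists>y\<in>worlds M. leq M v y \<and> d x = d y"
begin
definition Sq where "Sq a b \<longleftrightarrow> (\<exists>w\<in>worlds M. \<exists>v\<in>worlds M. d w = a \<and> d v = b \<and> sqq M w v)"
definition N :: "'q model" where "N = \<lparr> worlds = d ` worlds M, fallible = d ` fallible M,
   leq = (\<lambda>a b. \<exists>w\<in>worlds M. \<exists>v\<in>worlds M. d w = a \<and> d v = b \<and> leq M w v),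
   sqq = (\<lambda>a b. a \<in> d ` worlds M \<and> Sq\<^sup>*\<^sup>* a b),
   val = (\<lambda>p. if Var p \<in> S then d ` val M p else d ` fallible M) \<rparr>"

lemma N_simps: "worlds N = d ` worlds M" "fallible N = d ` fallible M"
  "leq N a b \<longleftrightarrow> (\<exists>w\<in>worlds M. \<exists>v\<in>worlds M. d w = a \<and> d v = b \<and> leq M w v)"
  "sqq N a b \<longleftrightarrow> a \<in> d ` worlds M \<and> Sq\<^sup>*\<^sup>* a b"
  "val N p = (if Var p \<in> S then d ` val M p else d ` fallible M)"
  unfolding N_def by simp_all

lemma K1: assumes wW: "w \<in> worlds M" shows "leq N (d w) b \<longleftrightarrow> (\<exists>v\<in>worlds M. leq M w v \<and> d v = b)"
  proof
  assume "leq N (d w) b"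
  then obtain w1 v1 where "w1 \<in> worlds M" "v1 \<in> worlds M" "d w1 = d w" "d v1 = b" "leq M w1 v1"
    unfolding N_simps by blast
  then obtain y where "y \<in> worlds M" "leq M w y" "d v1 = d y" using zig[of w1 w v1] wW by blast
  then show "\<exists>v\<in>worlds M. leq M w v \<and> d v = b" using \<open>d v1 = b\<close> by auto
next
  assume "\<exists>v\<in>worlds M. leq M w v \<and> d v = b"
  then obtain v where "v \<in> worlds M" "leq M w v" "d v = b" by blast
  then show "leq N (d w) b" unfolding N_simps using wW by blast
qed

lemma Sq_W: "Sq a b \<Longrightarrow> a \<in> d ` worlds M \<and> b \<in> d ` worlds M"
  unfolding Sq_def by blast

lemma rt_W: "Sq\<^sup>*\<^sup>* a b \<Longrightarrow> a \<in> d ` worlds M \<Longrightarrow> b \<in> d ` worlds M"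
  by (induction rule: rtranclp_induct) (use Sq_W in blast)+

lemma Bm_mono: "Bm w c \<Longrightarrow> sqq M w v \<Longrightarrow> Bm v c"
  unfolding Bm_def using mod_sqq_trans[OF model] by blast
lemma Pm_mono: "Pm v c \<Longrightarrow> sqq M w v \<Longrightarrow> Pm w c"
  unfolding Pm_def using mod_sqq_trans[OF model] by blast

lemma inv: "Sq\<^sup>*\<^sup>* a b \<Longrightarrow> w \<in> worlds M \<Longrightarrow> d w = a \<Longrightarrow> v \<in> worlds M \<Longrightarrow> d v = b \<Longrightarrow> c \<in> S \<Longrightarrow>
   (Bm w c \<longrightarrow> Bm v c) \<and> (Pm v c \<longrightarrow> Pm w c)"
proof (induction arbitrary: v rule: rtranclp_induct)
  case base
  then have "lab w = lab v" using d_lab[of w v] by simp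
  then show ?case using lab_B lab_P base by blast
next
  case (step c' b)
  obtain w2 v2 where W2: "w2 \<in> worlds M" "v2 \<in> worlds M" "d w2 = c'" "d v2 = b" "sqq M w2 v2"
    using step.hyps(2) unfolding Sq_def by blast
  have IH: "(Bm w c \<longrightarrow> Bm w2 c) \<and> (Pm w2 c \<longrightarrow> Pm w c)" using step.IH step.prems W2 by blast
  have "d v2 = d v" using W2(4) step.prems(4) by simp
  then have L: "lab v2 = lab v" by (rule d_lab[OF W2(2) step.prems(3)])
  show ?case
  proof (intro conjI impI)
    assume "Bm w c" then have "Bm v2 c" using IH Bm_mono W2 by blast
    then show "Bm v c" using L lab_B step.prems by blast
  next
    assume "Pm v c" then have "Pm v2 c" using L lab_P step.prems by blast
    then have "Pm w2 c" using Pm_mono W2 by blast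
    then show "Pm w c" using IH by blast
  qed
qed


lemma truth: "\<psi> \<in> S \<Longrightarrow> w \<in> worlds M \<Longrightarrow> sat N (d w) \<psi> \<longleftrightarrow> sat M w \<psi>"
proof (induction \<psi> arbitrary: w)
  case (Var p)
  have "d w \<in> d ` val M p \<longleftrightarrow> w \<in> val M p"
  proof
    assume "d w \<in> d ` val M p"
    then obtain u where u: "u \<in> val M p" "d w = d u" by (rule imageE)
    have uW: "u \<in> worlds M" using u(1) mod_valW[OF model] by blast
    have "lab u = lab w" using d_lab[OF uW Var.prems(2)] u(2) by simp
    then have "sat M u (Var p) \<longleftrightarrow> sat M w (Var p)" using lab_sat Var.prems(1) by blast
    then show "w \<in> val M p" using u(1) by simp
  next
    assume "w \<in> val M p" then show "d w \<in> d ` val M p" by (rule imageI)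
  qed
  then show ?case using Var.prems(1) by (simp add: N_simps)
next
  case Bot
  have "d w \<in> d ` fallible M \<longleftrightarrow> w \<in> fallible M"
  proof
    assume "d w \<in> d ` fallible M"
    then obtain u where u: "u \<in> fallible M" "d w = d u" by (rule imageE)
    have uW: "u \<in> worlds M" using u(1) mod_fallW[OF model] by blast
    have "lab u = lab w" using d_lab[OF uW Bot.prems(2)] u(2) by simp
    then show "w \<in> fallible M" using lab_fall u(1) by blast
  next
    assume "w \<in> fallible M" then show "d w \<in> d ` fallible M" by (rule imageI)
  qed
  then show ?case by (simp add: N_simps)
next
  case (And a b)
  have ab: "a \<in> S" "b \<in> S" using clA[OF And.prems(1)] by simp_all
  show ?case using And.IH(1)[OF ab(1) And.prems(2)] And.IH(2)[OF ab(2) And.prems(2)] by simp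
next
  case (Or a b)
  have ab: "a \<in> S" "b \<in> S" using clO[OF Or.prems(1)] by simp_all
  show ?case using Or.IH(1)[OF ab(1) Or.prems(2)] Or.IH(2)[OF ab(2) Or.prems(2)] by simp
next
  case (Imp a b)
  have ab: "a \<in> S" "b \<in> S" using clI[OF Imp.prems(1)] by simp_all
  note IHa = Imp.IH(1)[OF ab(1)] and IHb = Imp.IH(2)[OF ab(2)]
  show ?case
  proof
    assume H: "sat N (d w) (Imp a b)"
    have H': "\<forall>c\<in>worlds N. leq N (d w) c \<longrightarrow> sat N c a \<longrightarrow> sat N c b" using H by simp
    show "sat M w (Imp a b)" unfolding sat.simps
    proof (intro ballI impI)
      fix v assume v: "v \<in> worlds M" "leq M w v" "sat M v a"
      have "leq N (d w) (d v)" using K1[OF Imp.prems(2)] v by blast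
      moreover have "sat N (d v) a" using IHa[OF v(1)] v(3) by simp
      moreover have "d v \<in> worlds N" using v(1) by (simp add: N_simps)
      ultimately have "sat N (d v) b" using H' by blast
      then show "sat M v b" using IHb[OF v(1)] by simp
    qed
  next
    assume H: "sat M w (Imp a b)"
    have H': "\<forall>v\<in>worlds M. leq M w v \<longrightarrow> sat M v a \<longrightarrow> sat M v b" using H by simp
    show "sat N (d w) (Imp a b)" unfolding sat.simps
    proof (intro ballI impI)
      fix c assume c: "c \<in> worlds N" "leq N (d w) c" "sat N c a"
      obtain v where v: "v \<in> worlds M" "leq M w v" "d v = c" using K1[OF Imp.prems(2)] c(2) by blast
      have "sat M v a" using IHa[OF v(1)] c(3) v(3) by simp
      then have "sat M v b" using H' v by blast
      then show "sat N c b" using IHb[OF v(1)] v(3) by simp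
    qed
  qed
next
  case (Dia a)
  have aS: "a \<in> S" using clD Dia.prems by auto
  show ?case
  proof
    assume H: "sat N (d w) (Dia a)"
    show "sat M w (Dia a)"
    proof (simp, intro ballI impI)
      fix u assume u: "u \<in> worlds M" "leq M w u"
      then have "leq N (d w) (d u)" using K1 Dia.prems by blast
      then obtain e where e: "e \<in> worlds N" "sqq N (d u) e" "sat N e a"
        using H u by (auto simp: N_simps)
      then obtain v where v: "v \<in> worlds M" "d v = e" by (auto simp: N_simps)
      have "sat M v a" using Dia.IH aS v e by blast
      then have "Pm v a" unfolding Pm_def using v mod_sqq_refl[OF model] by blast
      then have "Pm u a" using inv[of "d u" e u v a] e v u aS by (auto simp: N_simps)
      then show "\<exists>v\<in>worlds M. sqq M u v \<and> sat M v a" unfolding Pm_def .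
    qed
  next
    assume H: "sat M w (Dia a)"
    show "sat N (d w) (Dia a)"
    proof (simp, intro ballI impI)
      fix c assume "c \<in> worlds N" "leq N (d w) c"
      then obtain u where u: "u \<in> worlds M" "leq M w u" "d u = c" using K1 Dia.prems by blast
      then obtain v where v: "v \<in> worlds M" "sqq M u v" "sat M v a" using H by auto
      have "Sq c (d v)" unfolding Sq_def using u v by blast
      then have "sqq N c (d v)" using u by (auto simp: N_simps)
      moreover have "sat N (d v) a" using Dia.IH aS v by blast
      moreover have "d v \<in> worlds N" using v by (simp add: N_simps)
      ultimately show "\<exists>e\<in>worlds N. sqq N c e \<and> sat N e a" by blast
    qed
  qed
next
  case (Box a)
  have aS: "a \<in> S" using clB Box.prems by auto
  show ?case
  proof
    assume H: "sat N (d w) (Box a)"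
    show "sat M w (Box a)"
    proof (simp, intro ballI impI)
      fix u v assume u: "u \<in> worlds M" "v \<in> worlds M" "leq M w u" "sqq M u v"
      then have "leq N (d w) (d u)" using K1 Box.prems by blast
      moreover have "Sq (d u) (d v)" unfolding Sq_def using u by blast
      then have "sqq N (d u) (d v)" using u by (auto simp: N_simps)
      ultimately have "sat N (d v) a" using H u by (auto simp: N_simps)
      then show "sat M v a" using Box.IH aS u by blast
    qed
  next
    assume H: "sat M w (Box a)"
    show "sat N (d w) (Box a)"
    proof (simp, intro ballI impI)
      fix c e assume ce: "c \<in> worlds N" "e \<in> worlds N" "leq N (d w) c" "sqq N c e"
      then obtain u where u: "u \<in> worlds M" "leq M w u" "d u = c" using K1 Box.prems by blast
      obtain v where v: "v \<in> worlds M" "d v = e" using ce by (auto simp: N_simps)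
      have "sat M u (Box a)" using persist[OF model u(2) H] .
      then have "Bm u a" unfolding Bm_def using u mod_leq_refl[OF model] by auto
      then have "Bm v a" using inv[of c e u v a] ce u v aS by (auto simp: N_simps)
      then have "sat M v a" unfolding Bm_def using v mod_sqq_refl[OF model] by blast
      then show "sat N e a" using Box.IH aS v by blast
    qed
  qed
qed

end




context quot begin

lemma up_img:
  assumes "U \<subseteq> worlds M" "\<And>u v. u \<in> U \<Longrightarrow> leq M u v \<Longrightarrow> v \<in> U"
  shows "up_closed (d ` worlds M) (leq N) (d ` U)"
  unfolding up_closed_def
proof (intro ballI impI)
  fix x y assume x: "x \<in> d ` U" and "y \<in> d ` worlds M" and xy: "leq N x y"
  obtain u where u: "u \<in> U" "x = d u" using x by blast
  have uW: "u \<in> worlds M" using u(1) assms(1) by blast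
  obtain v where v: "v \<in> worlds M" "leq M u v" "d v = y" using K1[OF uW] xy u(2) by blast
  have "v \<in> U" using assms(2)[OF u(1) v(2)] .
  then show "y \<in> d ` U" using v(3) by blast
qed

lemma fall_Sq: "Sq\<^sup>*\<^sup>* a b \<Longrightarrow> a \<in> d ` fallible M \<Longrightarrow> b \<in> d ` fallible M"
proof (induction rule: rtranclp_induct)
  case base then show ?case .
next
  case (step c b)
  obtain w2 v2 where W2: "w2 \<in> worlds M" "v2 \<in> worlds M" "d w2 = c" "d v2 = b" "sqq M w2 v2"
    using step.hyps(2) unfolding Sq_def by blast
  obtain f where f: "f \<in> fallible M" "c = d f" using step.IH step.prems by blast
  have fW: "f \<in> worlds M" using f(1) mod_fallW[OF model] by blast
  have "lab f = lab w2" using d_lab[OF fW W2(1)] f(2) W2(3) by simp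
  then have "w2 \<in> fallible M" using lab_fall f(1) by blast
  then have "v2 \<in> fallible M" using mod_fall_sqq[OF model] W2(5) by blast
  then show ?case using W2(4) by blast
qed

lemma N_model: "is_model N"
proof -
  have P1: "preorder_on (worlds N) (leq N)"
    unfolding preorder_on_def
  proof (intro conjI allI impI ballI)
    fix x y assume "leq N x y" then show "x \<in> worlds N" "y \<in> worlds N" by (auto simp: N_simps)
  next
    fix x assume "x \<in> worlds N"
    then obtain w where w: "w \<in> worlds M" "x = d w" by (auto simp: N_simps)
    then show "leq N x x" using mod_leq_refl[OF model w(1)] by (auto simp: N_simps)
  next
    fix x y z assume "x \<in> worlds N" "y \<in> worlds N" "z \<in> worlds N" and xy: "leq N x y" and yz: "leq N y z"
    then obtain w where w: "w \<in> worlds M" "x = d w" by (auto simp: N_simps)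
    obtain v where v: "v \<in> worlds M" "leq M w v" "d v = y" using K1[OF w(1)] xy w(2) by blast
    obtain u where u: "u \<in> worlds M" "leq M v u" "d u = z" using K1[OF v(1)] yz v(3) by blast
    have "leq M w u" using mod_leq_trans[OF model v(2) u(2)] .
    then show "leq N x z" using K1[OF w(1)] u w(2) by blast
  qed
  have P2: "preorder_on (worlds N) (sqq N)"
    unfolding preorder_on_def
  proof (intro conjI allI impI ballI)
    fix x y assume "sqq N x y" then show "x \<in> worlds N" "y \<in> worlds N" using rt_W by (auto simp: N_simps)
  next
    fix x assume "x \<in> worlds N" then show "sqq N x x" by (simp add: N_simps)
  next
    fix x y z assume "x \<in> worlds N" "y \<in> worlds N" "z \<in> worlds N" and xy: "sqq N x y" and yz: "sqq N y z"
    then show "sqq N x z" by (auto simp: N_simps)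
  qed
  have F1: "fallible N \<subseteq> worlds N" using mod_fallW[OF model] by (auto simp: N_simps)
  have F2: "up_closed (worlds N) (leq N) (fallible N)"
    unfolding N_simps(1,2) by (rule up_img[OF mod_fallW[OF model]]) (use mod_fall_leq[OF model] in blast)
  have F3: "up_closed (worlds N) (sqq N) (fallible N)"
    unfolding up_closed_def using fall_Sq by (auto simp: N_simps)
  have V: "val N p \<subseteq> worlds N \<and> up_closed (worlds N) (leq N) (val N p) \<and> fallible N \<subseteq> val N p" for p
  proof (cases "Var p \<in> S")
    case True
    have "val N p = d ` val M p" using True by (simp add: N_simps)
    moreover have "d ` val M p \<subseteq> d ` worlds M" using mod_valW[OF model] by blast
    moreover have "up_closed (d ` worlds M) (leq N) (d ` val M p)"
      by (rule up_img[OF mod_valW[OF model]]) (use mod_val_leq[OF model] in blast)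
    moreover have "d ` fallible M \<subseteq> d ` val M p" using mod_fall_val[OF model] by blast
    ultimately show ?thesis by (simp add: N_simps)
  next
    case False
    have "val N p = d ` fallible M" using False by (simp add: N_simps)
    then show ?thesis using F1 F2 by (simp add: N_simps)
  qed
  show ?thesis unfolding is_model_def using P1 P2 F1 F2 F3 V by blast
qed

lemma N_infall: "infallible M \<Longrightarrow> infallible N"
  unfolding infallible_def by (simp add: N_simps)

lemma N_ll: assumes "locally_linear M" shows "locally_linear N"
  unfolding locally_linear_def
proof (intro ballI impI)
  fix a b c assume "a \<in> worlds N" "b \<in> worlds N" "c \<in> worlds N" and ab: "leq N a b" and ac: "leq N a c"
  then obtain w where w: "w \<in> worlds M" "a = d w" by (auto simp: N_simps)
  obtain v where v: "v \<in> worlds M" "leq M w v" "d v = b" using K1[OF w(1)] ab w(2) by blast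
  obtain u where u: "u \<in> worlds M" "leq M w u" "d u = c" using K1[OF w(1)] ac w(2) by blast
  have "leq M v u \<or> leq M u v" using assms w(1) v u unfolding locally_linear_def by blast
  then show "leq N b c \<or> leq N c b" using v u by (auto simp: N_simps)
qed

lemma N_back: assumes BC: "backward_confluent M" shows "backward_confluent N"
proof -
  have main: "Sq\<^sup>*\<^sup>* a b \<Longrightarrow> a \<in> worlds N \<Longrightarrow> leq N b b' \<Longrightarrow> \<exists>a'. leq N a a' \<and> sqq N a' b'" for a b b'
  proof (induction arbitrary: b' rule: rtranclp_induct)
    case base
    have "b' \<in> worlds N" using base(2) N_model unfolding is_model_def preorder_on_def by blast
    then show ?case using base(2) by (auto simp: N_simps)
  next
    case (step c b)
    obtain w2 v2 where W2: "w2 \<in> worlds M" "v2 \<in> worlds M" "d w2 = c" "d v2 = b" "sqq M w2 v2"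
      using step.hyps(2) unfolding Sq_def by blast
    obtain v3 where v3: "v3 \<in> worlds M" "leq M v2 v3" "d v3 = b'" using K1[OF W2(2)] step.prems(2) W2(4) by blast
    obtain w3 where w3: "w3 \<in> worlds M" "leq M w2 w3" "sqq M w3 v3"
      using BC W2 v3 unfolding backward_confluent_def by blast
    have "leq N c (d w3)" using K1[OF W2(1)] w3 W2(3) by blast
    then obtain a' where a': "leq N a a'" "sqq N a' (d w3)" using step.IH step.prems(1) by blast
    have "Sq (d w3) b'" unfolding Sq_def using w3 v3 by blast
    then have "sqq N a' b'" using a'(2) by (auto simp: N_simps)
    then show ?case using a'(1) by blast
  qed
  show ?thesis unfolding backward_confluent_def
  proof (intro ballI impI)
    fix a b b' assume A: "a \<in> worlds N" "b \<in> worlds N" "b' \<in> worlds N" "sqq N a b" "leq N b b'"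
    have "Sq\<^sup>*\<^sup>* a b" using A(4) by (simp add: N_simps)
    from main[OF this A(1) A(5)] obtain a' where "leq N a a'" "sqq N a' b'" by blast
    moreover have "a' \<in> worlds N" using \<open>leq N a a'\<close> by (auto simp: N_simps)
    ultimately show "\<exists>a'\<in>worlds N. leq N a a' \<and> sqq N a' b'" by blast
  qed
qed

lemma N_fwd: assumes FC: "forward_confluent M" shows "forward_confluent N"
proof -
  have main: "Sq\<^sup>*\<^sup>* a b \<Longrightarrow> a \<in> worlds N \<Longrightarrow> leq N a a' \<Longrightarrow> \<exists>b'. leq N b b' \<and> sqq N a' b'" for a b a'
  proof (induction arbitrary: a' rule: converse_rtranclp_induct)
    case base
    have "a' \<in> worlds N" using base(2) by (auto simp: N_simps)
    then show ?case using base(2) by (auto simp: N_simps)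
  next
    case (step a c)
    obtain w1 v1 where W1: "w1 \<in> worlds M" "v1 \<in> worlds M" "d w1 = a" "d v1 = c" "sqq M w1 v1"
      using step.hyps(1) unfolding Sq_def by blast
    obtain x where x: "x \<in> worlds M" "leq M w1 x" "d x = a'" using K1[OF W1(1)] step.prems(2) W1(3) by blast
    obtain v' where v': "v' \<in> worlds M" "leq M v1 v'" "sqq M x v'"
      using FC W1 x unfolding forward_confluent_def by blast
    have "leq N c (d v')" using K1[OF W1(2)] v' W1(4) by blast
    moreover have "c \<in> worlds N" using W1 by (auto simp: N_simps)
    ultimately obtain b' where b': "leq N b b'" "sqq N (d v') b'" using step.IH by blast
    have "Sq a' (d v')" unfolding Sq_def using x v' by blast
    then have "sqq N a' b'" using b'(2) x by (auto simp: N_simps)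
    then show ?case using b'(1) by blast
  qed
  show ?thesis unfolding forward_confluent_def
  proof (intro ballI impI)
    fix a a' b assume A: "a \<in> worlds N" "a' \<in> worlds N" "b \<in> worlds N" "leq N a a'" "sqq N a b"
    have "Sq\<^sup>*\<^sup>* a b" using A(5) by (simp add: N_simps)
    from main[OF this A(1) A(4)] obtain b' where "leq N b b'" "sqq N a' b'" by blast
    moreover have "b' \<in> worlds N" using \<open>leq N b b'\<close> by (auto simp: N_simps)
    ultimately show "\<exists>b'\<in>worlds N. leq N b b' \<and> sqq N a' b'" by blast
  qed
qed

end

locale quot_zag = quot +
  assumes zag: "w \<in> worlds M \<Longrightarrow> v \<in> worlds M \<Longrightarrow> d w = d v \<Longrightarrow> leq M y w \<Longrightarrow> \<exists>z\<in>worlds M. leq M z v \<and> d y = d z"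
begin

lemma N_down: assumes DC: "downward_confluent M" shows "downward_confluent N"
proof -
  have main: "Sq\<^sup>*\<^sup>* b b' \<Longrightarrow> leq N a b \<Longrightarrow> \<exists>a'. sqq N a a' \<and> leq N a' b'" for a b b'
  proof (induction arbitrary: a rule: converse_rtranclp_induct)
    case base
    have "a \<in> worlds N" using base by (auto simp: N_simps)
    then show ?case using base by (auto simp: N_simps)
  next
    case (step b c)
    obtain w2 v2 where W2: "w2 \<in> worlds M" "v2 \<in> worlds M" "d w2 = b" "d v2 = c" "sqq M w2 v2"
      using step.hyps(1) unfolding Sq_def by blast
    obtain w v where wv: "w \<in> worlds M" "v \<in> worlds M" "d w = a" "d v = b" "leq M w v"
      using step.prems by (auto simp: N_simps)
    obtain z where z: "z \<in> worlds M" "leq M z w2" "d w = d z"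
      using zag[OF wv(2) W2(1)] wv(4,5) W2(3) by auto
    obtain z' where z': "z' \<in> worlds M" "sqq M z z'" "leq M z' v2"
      using DC z W2 unfolding downward_confluent_def by blast
    have "leq N (d z') c" using K1[OF z'(1)] z' W2(2,4) by blast
    then obtain a' where a': "sqq N (d z') a'" "leq N a' b'" using step.IH by blast
    have "Sq a (d z')" unfolding Sq_def using z z' wv(1,3) by metis
    then have "sqq N a a'" using a'(1) wv by (auto simp: N_simps)
    then show ?case using a'(2) by blast
  qed
  show ?thesis unfolding downward_confluent_def
  proof (intro ballI impI)
    fix a b b' assume A: "a \<in> worlds N" "b \<in> worlds N" "b' \<in> worlds N" "leq N a b" "sqq N b b'"
    have "Sq\<^sup>*\<^sup>* b b'" using A(5) by (simp add: N_simps)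
    from main[OF this A(4)] obtain a' where "sqq N a a'" "leq N a' b'" by blast
    moreover have "a' \<in> worlds N" using \<open>leq N a' b'\<close> by (auto simp: N_simps)
    ultimately show "\<exists>a'\<in>worlds N. sqq N a a' \<and> leq N a' b'" by blast
  qed
qed

end




lemma fin_det:
  assumes "finite (f ` A)" "\<And>a b. a \<in> A \<Longrightarrow> b \<in> A \<Longrightarrow> f a = f b \<Longrightarrow> g a = g b"
  shows "finite (g ` A)"
proof -
  have "g ` A \<subseteq> (\<lambda>c. g (inv_into A f c)) ` (f ` A)"
  proof
    fix z assume "z \<in> g ` A"
    then obtain a where a: "a \<in> A" "z = g a" by blast
    have "inv_into A f (f a) \<in> A" using a(1) by (simp add: inv_into_into)
    moreover have "f (inv_into A f (f a)) = f a" using a(1) by (simp add: f_inv_into_f)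
    ultimately have "g (inv_into A f (f a)) = g a" using assms(2) a(1) by blast
    then show "z \<in> (\<lambda>c. g (inv_into A f c)) ` (f ` A)" using a by force
  qed
  then show ?thesis using assms(1) finite_surj by blast
qed

locale hbase = base +
  fixes Hb :: nat
  assumes bound: "w \<in> worlds M \<Longrightarrow> has_chain M w n \<Longrightarrow> n \<le> Hb"
begin

definition hg where "hg w = (GREATEST n. has_chain M w n)"

lemma chain0: "w \<in> worlds M \<Longrightarrow> has_chain M w 0"
  unfolding has_chain_def by (rule exI[of _ "\<lambda>_. w"]) simp

lemma hg_chain: "w \<in> worlds M \<Longrightarrow> has_chain M w (hg w)"
  unfolding hg_def by (rule GreatestI_nat[of _ 0 Hb]) (auto intro: chain0 bound)

lemma hg_ge: "w \<in> worlds M \<Longrightarrow> has_chain M w n \<Longrightarrow> n \<le> hg w"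
  unfolding hg_def by (rule Greatest_le_nat[of _ _ Hb]) (auto intro: bound)

lemma hg_le: "w \<in> worlds M \<Longrightarrow> hg w \<le> Hb"
  using hg_chain bound by blast

lemma chain_cons:
  assumes wx: "leq M w x" "\<not> leq M x w" and c: "has_chain M x n"
  shows "has_chain M w (Suc n)"
proof -
  obtain f where f: "f 0 = x" "\<forall>i\<le>n. f i \<in> worlds M" "\<forall>i<n. strict_le M (f i) (f (Suc i))"
    using c unfolding has_chain_def by blast
  define g where "g i = (if i = 0 then w else f (i - 1))" for i
  have "w \<in> worlds M" using mod_leqW[OF model wx(1)] by blast
  then have "\<forall>i\<le>Suc n. g i \<in> worlds M" using f(2) unfolding g_def by auto
  moreover have "\<forall>i<Suc n. strict_le M (g i) (g (Suc i))"
  proof (intro allI impI)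
    fix i assume "i < Suc n"
    show "strict_le M (g i) (g (Suc i))"
    proof (cases i)
      case 0 then show ?thesis using wx f(1) unfolding g_def strict_le_def by simp
    next
      case (Suc j) then show ?thesis using f(3) \<open>i < Suc n\<close> unfolding g_def by simp
    qed
  qed
  moreover have "g 0 = w" unfolding g_def by simp
  ultimately show ?thesis unfolding has_chain_def by blast
qed

lemma chain_repl:
  assumes wx: "leq M w x" and c: "has_chain M x n"
  shows "has_chain M w n"
proof -
  obtain f where f: "f 0 = x" "\<forall>i\<le>n. f i \<in> worlds M" "\<forall>i<n. strict_le M (f i) (f (Suc i))"
    using c unfolding has_chain_def by blast
  define g where "g i = (if i = 0 then w else f i)" for i
  have "w \<in> worlds M" using mod_leqW[OF model wx] by blast
  then have "\<forall>i\<le>n. g i \<in> worlds M" using f(2) unfolding g_def by auto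
  moreover have "\<forall>i<n. strict_le M (g i) (g (Suc i))"
  proof (intro allI impI)
    fix i assume i: "i < n"
    show "strict_le M (g i) (g (Suc i))"
    proof (cases i)
      case 0
      have s: "leq M x (f 1)" "\<not> leq M (f 1) x" using f(3) i 0 f(1) unfolding strict_le_def by auto
      have "leq M w (f 1)" using mod_leq_trans[OF model wx s(1)] .
      moreover have "\<not> leq M (f 1) w" using mod_leq_trans[OF model _ wx] s(2) by blast
      ultimately show ?thesis using 0 unfolding g_def strict_le_def by simp
    next
      case (Suc j) then show ?thesis using f(3) i unfolding g_def by simp
    qed
  qed
  moreover have "g 0 = w" unfolding g_def by simp
  ultimately show ?thesis unfolding has_chain_def by blast
qed

lemma hg_mono: "leq M w x \<Longrightarrow> hg x \<le> hg w"
  using hg_ge chain_repl hg_chain mod_leqW[OF model] by meson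

lemma hg_strict: "leq M w x \<Longrightarrow> \<not> leq M x w \<Longrightarrow> hg x < hg w"
proof -
  assume a: "leq M w x" "\<not> leq M x w"
  have "x \<in> worlds M" "w \<in> worlds M" using mod_leqW[OF model a(1)] by auto
  then have "has_chain M w (Suc (hg x))" using chain_cons[OF a hg_chain] by blast
  then show ?thesis using hg_ge \<open>w \<in> worlds M\<close> by fastforce
qed

lemma same_hg: "leq M w x \<Longrightarrow> hg x = hg w \<Longrightarrow> leq M x w"
  using hg_strict by fastforce

definition lab' where "lab' w = (lab w, hg w)"

definition pth where "pth R w x v y \<longleftrightarrow>
   (\<forall>x'\<in>worlds M. leq M w x' \<and> leq M x' x \<longrightarrow> (\<exists>y'\<in>worlds M. leq M v y' \<and> leq M y' y \<and> R x' y')) \<and>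
   (\<forall>y'\<in>worlds M. leq M v y' \<and> leq M y' y \<longrightarrow> (\<exists>x'\<in>worlds M. leq M w x' \<and> leq M x' x \<and> R x' y'))"

definition fw where "fw R w v \<longleftrightarrow>
   (\<forall>x\<in>worlds M. leq M w x \<longrightarrow> (\<exists>y\<in>worlds M. leq M v y \<and> R x y \<and> pth R w x v y))"

primrec eqk :: "nat \<Rightarrow> 'a \<Rightarrow> 'a \<Rightarrow> bool" where
  "eqk 0 = (\<lambda>w v. lab' w = lab' v)"
| "eqk (Suc k) = (\<lambda>w v. eqk k w v \<and> fw (eqk k) w v \<and> fw (eqk k) v w)"


lemma eqk_lab: "eqk k w v \<Longrightarrow> lab' w = lab' v"
  by (induction k) auto

lemma eqk_hg: "eqk k w v \<Longrightarrow> hg w = hg v"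
  using eqk_lab unfolding lab'_def by simp

lemma eqk_labl: "eqk k w v \<Longrightarrow> lab w = lab v"
  using eqk_lab unfolding lab'_def by simp

lemma eqk_sym: "eqk k w v \<Longrightarrow> eqk k v w"
  by (induction k arbitrary: w v) auto

lemma eqk_Suc: "eqk (Suc k) w v \<Longrightarrow> eqk k w v"
  by simp

lemma fw_refl: assumes "\<And>x. x \<in> worlds M \<Longrightarrow> R x x" shows "fw R w w"
  unfolding fw_def pth_def using assms by blast

lemma pth_trans: assumes "\<And>a b c. R a b \<Longrightarrow> R b c \<Longrightarrow> R a c"
  and "pth R w x v y" "pth R v y u z" shows "pth R w x u z"
  unfolding pth_def
proof (intro conjI ballI impI)
  fix x' assume x': "x' \<in> worlds M" "leq M w x' \<and> leq M x' x"
  obtain y' where y': "y' \<in> worlds M" "leq M v y'" "leq M y' y" "R x' y'" using assms(2) x' unfolding pth_def by blast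
  obtain z' where z': "z' \<in> worlds M" "leq M u z'" "leq M z' z" "R y' z'" using assms(3) y' unfolding pth_def by blast
  show "\<exists>z'\<in>worlds M. leq M u z' \<and> leq M z' z \<and> R x' z'" using z' y'(4) assms(1) by blast
next
  fix z' assume z': "z' \<in> worlds M" "leq M u z' \<and> leq M z' z"
  obtain y' where y': "y' \<in> worlds M" "leq M v y'" "leq M y' y" "R y' z'" using assms(3) z' unfolding pth_def by blast
  obtain x' where x': "x' \<in> worlds M" "leq M w x'" "leq M x' x" "R x' y'" using assms(2) y' unfolding pth_def by blast
  show "\<exists>x'\<in>worlds M. leq M w x' \<and> leq M x' x \<and> R x' z'" using x' y'(4) assms(1) by blast
qed

lemma fw_trans: assumes T: "\<And>a b c. R a b \<Longrightarrow> R b c \<Longrightarrow> R a c"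
  and A: "fw R w v" and B: "fw R v u" shows "fw R w u"
  unfolding fw_def
proof (intro ballI impI)
  fix x assume x: "x \<in> worlds M" "leq M w x"
  obtain y where y: "y \<in> worlds M" "leq M v y" "R x y" "pth R w x v y" using A x unfolding fw_def by blast
  obtain z where z: "z \<in> worlds M" "leq M u z" "R y z" "pth R v y u z" using B y unfolding fw_def by blast
  have "R x z" using T y(3) z(3) by blast
  moreover have "pth R w x u z" using pth_trans[of R, OF T y(4) z(4)] .
  ultimately show "\<exists>z\<in>worlds M. leq M u z \<and> R x z \<and> pth R w x u z" using z(1,2) by blast
qed

lemma eqk_refl: "w \<in> worlds M \<Longrightarrow> eqk k w w"
proof (induction k arbitrary: w)
  case 0 then show ?case by simp
next
  case (Suc k)
  have "fw (eqk k) w w" by (rule fw_refl) (use Suc.IH in blast)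
  then show ?case using Suc by simp
qed

lemma eqk_trans: "eqk k w v \<Longrightarrow> eqk k v u \<Longrightarrow> eqk k w u"
proof (induction k arbitrary: w v u)
  case 0 then show ?case by simp
next
  case (Suc k)
  have T: "\<And>a b c. eqk k a b \<Longrightarrow> eqk k b c \<Longrightarrow> eqk k a c" using Suc.IH by blast
  have A: "fw (eqk k) w v" "fw (eqk k) v u" "fw (eqk k) u v" "fw (eqk k) v w" using Suc.prems by simp_all
  have "fw (eqk k) w u" using fw_trans[OF T A(1,2)] .
  moreover have "fw (eqk k) u w" using fw_trans[OF T A(3,4)] .
  moreover have "eqk k w v" "eqk k v u" using Suc.prems by simp_all
  then have "eqk k w u" by (rule T)
  ultimately show ?case by simp
qed

definition cls where "cls k w = {v \<in> worlds M. eqk k w v}"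

lemma cls_eq: "w \<in> worlds M \<Longrightarrow> v \<in> worlds M \<Longrightarrow> cls k w = cls k v \<longleftrightarrow> eqk k w v"
proof
  assume "w \<in> worlds M" "v \<in> worlds M" "cls k w = cls k v"
  then have "v \<in> cls k w" using eqk_refl unfolding cls_def by blast
  then show "eqk k w v" unfolding cls_def by blast
next
  assume "w \<in> worlds M" "v \<in> worlds M" "eqk k w v"
  then show "cls k w = cls k v" unfolding cls_def using eqk_trans eqk_sym by blast
qed

definition Fs where "Fs k w = {(cls k x, {cls k x' | x'. x' \<in> worlds M \<and> leq M w x' \<and> leq M x' x}) | x. x \<in> worlds M \<and> leq M w x}"

lemma Fs_fw: assumes W: "w \<in> worlds M" "v \<in> worlds M" and F: "Fs k w = Fs k v" shows "fw (eqk k) w v"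
  unfolding fw_def
proof (intro ballI impI)
  fix x assume x: "x \<in> worlds M" "leq M w x"
  have "(cls k x, {cls k x' | x'. x' \<in> worlds M \<and> leq M w x' \<and> leq M x' x}) \<in> Fs k v"
    using F x unfolding Fs_def by blast
  then obtain y where y: "y \<in> worlds M" "leq M v y" "cls k x = cls k y"
     "{cls k x' | x'. x' \<in> worlds M \<and> leq M w x' \<and> leq M x' x} = {cls k y' | y'. y' \<in> worlds M \<and> leq M v y' \<and> leq M y' y}"
    unfolding Fs_def by blast
  have "eqk k x y" using cls_eq x(1) y(1) y(3) by blast
  moreover have "pth (eqk k) w x v y"
    unfolding pth_def
  proof (intro conjI ballI impI)
    fix x' assume x': "x' \<in> worlds M" "leq M w x' \<and> leq M x' x"
    then have "cls k x' \<in> {cls k y' | y'. y' \<in> worlds M \<and> leq M v y' \<and> leq M y' y}" using y(4) by blast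
    then obtain y' where "y' \<in> worlds M" "leq M v y'" "leq M y' y" "cls k x' = cls k y'" by blast
    then show "\<exists>y'\<in>worlds M. leq M v y' \<and> leq M y' y \<and> eqk k x' y'" using cls_eq x'(1) by blast
  next
    fix y' assume y': "y' \<in> worlds M" "leq M v y' \<and> leq M y' y"
    then have "cls k y' \<in> {cls k x' | x'. x' \<in> worlds M \<and> leq M w x' \<and> leq M x' x}" using y(4) by blast
    then obtain x' where "x' \<in> worlds M" "leq M w x'" "leq M x' x" "cls k y' = cls k x'" by blast
    then show "\<exists>x'\<in>worlds M. leq M w x' \<and> leq M x' x \<and> eqk k x' y'" using cls_eq[of x' y' k] y'(1) by auto
  qed
  ultimately show "\<exists>y\<in>worlds M. leq M v y \<and> eqk k x y \<and> pth (eqk k) w x v y" using y by blast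
qed

lemma fin_cls: "finite (cls k ` worlds M)"
proof (induction k)
  case 0
  have "finite (lab' ` worlds M)"
  proof -
    have "lab' ` worlds M \<subseteq> lab ` worlds M \<times> {..Hb}" unfolding lab'_def using hg_le by auto
    then show ?thesis using finite_lab by (meson finite_SigmaI finite_atMost finite_subset)
  qed
  then show ?case
  proof (rule fin_det)
    fix a b assume "a \<in> worlds M" "b \<in> worlds M" "lab' a = lab' b"
    then show "cls 0 a = cls 0 b" using cls_eq[of a b 0] by simp
  qed
next
  case (Suc k)
  define C where "C = cls k ` worlds M"
  let ?f = "\<lambda>w. (cls k w, Fs k w)"
  have "?f ` worlds M \<subseteq> C \<times> Pow (C \<times> Pow C)" unfolding C_def Fs_def by auto
  moreover have "finite (C \<times> Pow (C \<times> Pow C))" using Suc.IH unfolding C_def by simp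
  ultimately have fin: "finite (?f ` worlds M)" using finite_subset by blast
  show ?case
  proof (rule fin_det[OF fin])
    fix a b assume ab: "a \<in> worlds M" "b \<in> worlds M" "?f a = ?f b"
    have "eqk k a b" using cls_eq ab by simp
    moreover have "fw (eqk k) a b" using Fs_fw ab by simp
    moreover have "fw (eqk k) b a" using Fs_fw ab by simp
    ultimately have "eqk (Suc k) a b" by simp
    then show "cls (Suc k) a = cls (Suc k) b" using cls_eq ab by blast
  qed
qed

end




context hbase begin

lemma fw_cluster:
  assumes A: "fw R w v" and c: "leq M w x" "leq M x w" "leq M v y" "leq M y v"
  shows "fw R x y"
  unfolding fw_def
proof (intro ballI impI)
  fix z assume z: "z \<in> worlds M" "leq M x z"
  have wz: "leq M w z" using mod_leq_trans[OF model c(1) z(2)] .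
  obtain z' where z': "z' \<in> worlds M" "leq M v z'" "R z z'" "pth R w z v z'" using A z(1) wz unfolding fw_def by blast
  have yz': "leq M y z'" using mod_leq_trans[OF model c(4) z'(2)] .
  have "pth R x z y z'"
    unfolding pth_def
  proof (intro conjI ballI impI)
    fix x' assume x': "x' \<in> worlds M" "leq M x x' \<and> leq M x' z"
    have "leq M w x'" using mod_leq_trans[OF model c(1)] x' by blast
    then obtain y' where y': "y' \<in> worlds M" "leq M v y'" "leq M y' z'" "R x' y'" using z'(4) x' unfolding pth_def by blast
    have "leq M y y'" using mod_leq_trans[OF model c(4) y'(2)] .
    then show "\<exists>y'\<in>worlds M. leq M y y' \<and> leq M y' z' \<and> R x' y'" using y' by blast
  next
    fix y' assume y': "y' \<in> worlds M" "leq M y y' \<and> leq M y' z'"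
    have "leq M v y'" using mod_leq_trans[OF model c(3)] y' by blast
    then obtain x' where x': "x' \<in> worlds M" "leq M w x'" "leq M x' z" "R x' y'" using z'(4) y' unfolding pth_def by blast
    have "leq M x x'" using mod_leq_trans[OF model c(2) x'(2)] .
    then show "\<exists>x'\<in>worlds M. leq M x x' \<and> leq M x' z \<and> R x' y'" using x' by blast
  qed
  show "\<exists>z'\<in>worlds M. leq M y z' \<and> R z z' \<and> pth R x z y z'" using z'(1,3) yz' \<open>pth R x z y z'\<close> by blast
qed

lemma fw_up:
  assumes A: "fw R w v" and U: "\<And>x y. x \<in> worlds M \<Longrightarrow> y \<in> worlds M \<Longrightarrow> leq M w x \<Longrightarrow> leq M v y \<Longrightarrow> R x y \<Longrightarrow> R' x y"
  shows "fw R' w v"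
  unfolding fw_def
proof (intro ballI impI)
  fix z assume z: "z \<in> worlds M" "leq M w z"
  obtain z' where z': "z' \<in> worlds M" "leq M v z'" "R z z'" "pth R w z v z'" using A z unfolding fw_def by blast
  have "pth R' w z v z'"
    unfolding pth_def
  proof (intro conjI ballI impI)
    fix x' assume x': "x' \<in> worlds M" "leq M w x' \<and> leq M x' z"
    then obtain y' where y': "y' \<in> worlds M" "leq M v y'" "leq M y' z'" "R x' y'" using z'(4) unfolding pth_def by blast
    then show "\<exists>y'\<in>worlds M. leq M v y' \<and> leq M y' z' \<and> R' x' y'" using U x' by blast
  next
    fix y' assume y': "y' \<in> worlds M" "leq M v y' \<and> leq M y' z'"
    then obtain x' where x': "x' \<in> worlds M" "leq M w x'" "leq M x' z" "R x' y'" using z'(4) unfolding pth_def by blast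
    then show "\<exists>x'\<in>worlds M. leq M w x' \<and> leq M x' z \<and> R' x' y'" using U y' by blast
  qed
  moreover have "R' z z'" using U z z' by blast
  ultimately show "\<exists>z'\<in>worlds M. leq M v z' \<and> R' z z' \<and> pth R' w z v z'" using z' by blast
qed

lemma cl:
  assumes "eqk (Suc k) w v" "leq M w x" "leq M x w" "leq M v y" "leq M y v" "eqk k x y"
  shows "eqk (Suc k) x y"
proof -
  have A: "fw (eqk k) w v" "fw (eqk k) v w" using assms(1) by simp_all
  have "fw (eqk k) x y" using fw_cluster[OF A(1) assms(2-5)] .
  moreover have "fw (eqk k) y x" using fw_cluster[OF A(2) assms(4,5,2,3)] .
  ultimately show ?thesis using assms(6) by simp
qed

lemma stab: "w \<in> worlds M \<Longrightarrow> v \<in> worlds M \<Longrightarrow> hg w \<le> k \<Longrightarrow> eqk (Suc k) w v \<Longrightarrow> eqk (Suc (Suc k)) w v"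
proof (induction "hg w" arbitrary: w v k rule: less_induct)
  case less
  have hv: "hg v = hg w" using eqk_hg[OF less.prems(4)] by simp
  have U: "eqk (Suc k) x y" if xy: "x \<in> worlds M" "y \<in> worlds M" "leq M w x" "leq M v y" "eqk k x y" for x y
  proof (cases "hg x < hg w")
    case True
    then obtain k' where k': "k = Suc k'" using less.prems(3) by (cases k) auto
    have "hg x \<le> k'" using True less.prems(3) k' by simp
    have "eqk (Suc k') x y" using xy(5) k' by simp
    then have "eqk (Suc (Suc k')) x y" using less.hyps[OF True xy(1,2) \<open>hg x \<le> k'\<close>] by blast
    then show ?thesis using k' by simp
  next
    case False
    have hx: "hg x = hg w" using False hg_mono[OF xy(3)] by simp
    have xw: "leq M x w" using same_hg[OF xy(3) hx] .
    have "hg y = hg v" using eqk_hg[OF xy(5)] hx hv by simp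
    then have yv: "leq M y v" using same_hg[OF xy(4)] by blast
    show ?thesis using cl[OF less.prems(4) xy(3) xw xy(4) yv xy(5)] .
  qed
  have A: "fw (eqk k) w v" "fw (eqk k) v w" using less.prems(4) by simp_all
  have "fw (eqk (Suc k)) w v" using fw_up[OF A(1)] U by blast
  moreover have "fw (eqk (Suc k)) v w"
  proof (rule fw_up[OF A(2)])
    fix y x assume "y \<in> worlds M" "x \<in> worlds M" "leq M v y" "leq M w x" "eqk k y x"
    then have "eqk (Suc k) x y" using U eqk_sym by blast
    then show "eqk (Suc k) y x" using eqk_sym by blast
  qed
  ultimately show ?case using less.prems(4) by simp
qed

definition E where "E = eqk (Suc Hb)"

lemma E_zig: "w \<in> worlds M \<Longrightarrow> v \<in> worlds M \<Longrightarrow> E w v \<Longrightarrow> leq M w x \<Longrightarrow>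
   \<exists>y\<in>worlds M. leq M v y \<and> E x y \<and> pth E w x v y"
proof -
  assume a: "w \<in> worlds M" "v \<in> worlds M" "E w v" "leq M w x"
  have "eqk (Suc (Suc Hb)) w v" using stab[OF a(1,2) hg_le[OF a(1)]] a(3) unfolding E_def by blast
  then have "fw E w v" unfolding E_def by simp
  moreover have "x \<in> worlds M" using mod_leqW[OF model a(4)] by blast
  ultimately show ?thesis using a(4) unfolding fw_def by blast
qed

definition C where "C w = cls (Suc Hb) w"

lemma C_eq: "w \<in> worlds M \<Longrightarrow> v \<in> worlds M \<Longrightarrow> C w = C v \<longleftrightarrow> E w v"
  unfolding C_def E_def by (rule cls_eq)

lemma fin_C: "finite (C ` worlds M)"
  unfolding C_def using fin_cls by simp

lemma C_lab: "w \<in> worlds M \<Longrightarrow> v \<in> worlds M \<Longrightarrow> C w = C v \<Longrightarrow> lab w = lab v"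
  using C_eq eqk_labl unfolding E_def by blast

lemma C_hg: "w \<in> worlds M \<Longrightarrow> v \<in> worlds M \<Longrightarrow> C w = C v \<Longrightarrow> hg w = hg v"
  using C_eq eqk_hg unfolding E_def by blast

lemma C_zig: "w \<in> worlds M \<Longrightarrow> v \<in> worlds M \<Longrightarrow> C w = C v \<Longrightarrow> leq M w x \<Longrightarrow> \<exists>y\<in>worlds M. leq M v y \<and> C x = C y"
proof -
  assume a: "w \<in> worlds M" "v \<in> worlds M" "C w = C v" "leq M w x"
  obtain y where y: "y \<in> worlds M" "leq M v y" "E x y" using E_zig[OF a(1,2) _ a(4)] a(3) C_eq[OF a(1,2)] by blast
  have "x \<in> worlds M" using mod_leqW[OF model a(4)] by blast
  then show ?thesis using y C_eq by blast
qed

end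




context quot begin

lemma transfer:
  assumes phi: "\<phi> \<in> S"
  shows "(satisfiable_in M \<phi> \<longrightarrow> satisfiable_in N \<phi>) \<and> (falsifiable_in M \<phi> \<longrightarrow> falsifiable_in N \<phi>)"
proof -
  have nf: "d w \<notin> fallible N" if w: "w \<in> worlds M" "w \<notin> fallible M" for w
  proof
    assume "d w \<in> fallible N"
    then obtain f where f: "f \<in> fallible M" "d w = d f" by (auto simp: N_simps)
    have fW: "f \<in> worlds M" using f(1) mod_fallW[OF model] by blast
    have "lab w = lab f" using d_lab[OF w(1) fW f(2)] .
    then show False using lab_fall f(1) w(2) by blast
  qed
  have wN: "d w \<in> worlds N" if "w \<in> worlds M" for w using that by (simp add: N_simps)
  show ?thesis
  proof (intro conjI impI)
    assume "satisfiable_in M \<phi>"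
    then obtain w where w: "w \<in> worlds M" "w \<notin> fallible M" "sat M w \<phi>" unfolding satisfiable_in_def by blast
    have "sat N (d w) \<phi>" using truth[OF phi w(1)] w(3) by simp
    then show "satisfiable_in N \<phi>" unfolding satisfiable_in_def using nf[OF w(1,2)] wN[OF w(1)] by blast
  next
    assume "falsifiable_in M \<phi>"
    then obtain w where w: "w \<in> worlds M" "w \<notin> fallible M" "\<not> sat M w \<phi>" unfolding falsifiable_in_def by blast
    have "\<not> sat N (d w) \<phi>" using truth[OF phi w(1)] w(3) by simp
    then show "falsifiable_in N \<phi>" unfolding falsifiable_in_def using nf[OF w(1,2)] wN[OF w(1)] by blast
  qed
qed

lemma logicN: assumes A: "logic_model L M" and B: "L \<noteq> S4I" shows "logic_model L N"
proof (cases L)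
  case CS4 then show ?thesis using N_model N_back A by simp
next
  case IS4 then show ?thesis using N_model N_back N_fwd N_infall A by simp
next
  case S4I then show ?thesis using B by simp
next
  case GS4 then show ?thesis using N_model N_back N_fwd N_infall N_ll A by simp
qed

end

context quot_zag begin
lemma logicN_S4I: "logic_model S4I M \<Longrightarrow> logic_model S4I N"
  using N_model N_down N_fwd N_infall by simp
end

context hbase begin

definition D where "D w = {C y | y. y \<in> worlds M \<and> leq M y w}"
definition df where "df w = (C w, D w)"

lemma fin_df: "finite (df ` worlds M)"
proof -
  have "df ` worlds M \<subseteq> C ` worlds M \<times> Pow (C ` worlds M)" unfolding df_def D_def by auto
  then show ?thesis using fin_C finite_subset by blast
qed

lemma df_lab: assumes "w \<in> worlds M" "v \<in> worlds M" "df w = df v" shows "lab w = lab v"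
proof -
  have "C w = C v" using assms(3) unfolding df_def by simp
  then show ?thesis by (rule C_lab[OF assms(1,2)])
qed

lemma D_split:
  assumes F: "forest_like M" and wx: "leq M w x"
  shows "D x = D w \<union> {C x' | x'. x' \<in> worlds M \<and> leq M w x' \<and> leq M x' x}"
proof
  have xW: "x \<in> worlds M" "w \<in> worlds M" using mod_leqW[OF model wx] by auto
  show "D x \<subseteq> D w \<union> {C x' | x'. x' \<in> worlds M \<and> leq M w x' \<and> leq M x' x}"
  proof
    fix c assume "c \<in> D x"
    then obtain y where y: "y \<in> worlds M" "leq M y x" "c = C y" unfolding D_def by blast
    have "leq M y w \<or> leq M w y" using F xW y(1,2) wx unfolding forest_like_def by blast
    then show "c \<in> D w \<union> {C x' | x'. x' \<in> worlds M \<and> leq M w x' \<and> leq M x' x}"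
      unfolding D_def using y by blast
  qed
  show "D w \<union> {C x' | x'. x' \<in> worlds M \<and> leq M w x' \<and> leq M x' x} \<subseteq> D x"
    unfolding D_def using mod_leq_trans[OF model _ wx] by blast
qed

lemma df_zig:
  assumes F: "forest_like M" and a: "w \<in> worlds M" "v \<in> worlds M" "df w = df v" "leq M w x"
  shows "\<exists>y\<in>worlds M. leq M v y \<and> df x = df y"
proof -
  have "C w = C v" "D w = D v" using a(3) unfolding df_def by simp_all
  then have "E w v" using C_eq a(1,2) by blast
  then obtain y where y: "y \<in> worlds M" "leq M v y" "E x y" "pth E w x v y" using E_zig a by blast
  have xW: "x \<in> worlds M" using mod_leqW[OF model a(4)] by blast
  have T: "{C x' | x'. x' \<in> worlds M \<and> leq M w x' \<and> leq M x' x} = {C y' | y'. y' \<in> worlds M \<and> leq M v y' \<and> leq M y' y}"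
  proof
    show "{C x' | x'. x' \<in> worlds M \<and> leq M w x' \<and> leq M x' x} \<subseteq> {C y' | y'. y' \<in> worlds M \<and> leq M v y' \<and> leq M y' y}"
    proof
      fix c assume "c \<in> {C x' | x'. x' \<in> worlds M \<and> leq M w x' \<and> leq M x' x}"
      then obtain x' where x': "x' \<in> worlds M" "leq M w x'" "leq M x' x" "c = C x'" by blast
      then obtain y' where y': "y' \<in> worlds M" "leq M v y'" "leq M y' y" "E x' y'" using y(4) unfolding pth_def by blast
      have "C x' = C y'" using C_eq x'(1) y'(1) y'(4) by blast
      then show "c \<in> {C y' | y'. y' \<in> worlds M \<and> leq M v y' \<and> leq M y' y}" using x'(4) y' by blast
    qed
  next
    show "{C y' | y'. y' \<in> worlds M \<and> leq M v y' \<and> leq M y' y} \<subseteq> {C x' | x'. x' \<in> worlds M \<and> leq M w x' \<and> leq M x' x}"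
    proof
      fix c assume "c \<in> {C y' | y'. y' \<in> worlds M \<and> leq M v y' \<and> leq M y' y}"
      then obtain y' where y': "y' \<in> worlds M" "leq M v y'" "leq M y' y" "c = C y'" by blast
      then obtain x' where x': "x' \<in> worlds M" "leq M w x'" "leq M x' x" "E x' y'" using y(4) unfolding pth_def by blast
      have "C x' = C y'" using C_eq x'(1) y'(1) x'(4) by blast
      then show "c \<in> {C x' | x'. x' \<in> worlds M \<and> leq M w x' \<and> leq M x' x}" using y'(4) x'(1,2,3) by blast
    qed
  qed
  have "D x = D y" using D_split[OF F a(4)] D_split[OF F y(2)] T \<open>D w = D v\<close> by simp
  moreover have "C x = C y" using C_eq xW y(1) y(3) by blast
  ultimately show ?thesis using y(1,2) unfolding df_def by auto
qed

lemma D_below: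
  assumes F: "forest_like M" and yw: "leq M y w"
  shows "D y = {C y' | y'. y' \<in> worlds M \<and> leq M y' w \<and> hg y \<le> hg y'}"
proof
  have W: "y \<in> worlds M" "w \<in> worlds M" using mod_leqW[OF model yw] by auto
  show "D y \<subseteq> {C y' | y'. y' \<in> worlds M \<and> leq M y' w \<and> hg y \<le> hg y'}"
  proof
    fix c assume "c \<in> D y"
    then obtain y' where y': "y' \<in> worlds M" "leq M y' y" "c = C y'" unfolding D_def by blast
    have "leq M y' w" using mod_leq_trans[OF model y'(2) yw] .
    moreover have "hg y \<le> hg y'" using hg_mono[OF y'(2)] .
    ultimately show "c \<in> {C y' | y'. y' \<in> worlds M \<and> leq M y' w \<and> hg y \<le> hg y'}" using y' by blast
  qed
  show "{C y' | y'. y' \<in> worlds M \<and> leq M y' w \<and> hg y \<le> hg y'} \<subseteq> D y"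
  proof
    fix c assume "c \<in> {C y' | y'. y' \<in> worlds M \<and> leq M y' w \<and> hg y \<le> hg y'}"
    then obtain y' where y': "y' \<in> worlds M" "leq M y' w" "hg y \<le> hg y'" "c = C y'" by blast
    have "leq M y' y \<or> leq M y y'" using F W y'(1,2) yw unfolding forest_like_def by blast
    then have "leq M y' y"
    proof
      assume yy: "leq M y y'"
      then have "hg y' \<le> hg y" using hg_mono by blast
      then have "hg y' = hg y" using y'(3) by simp
      then show "leq M y' y" using same_hg[OF yy] by blast
    qed
    then show "c \<in> D y" unfolding D_def using y' by blast
  qed
qed

lemma df_zag:
  assumes F: "forest_like M" and a: "w \<in> worlds M" "v \<in> worlds M" "df w = df v" "leq M y w"
  shows "\<exists>z\<in>worlds M. leq M z v \<and> df y = df z"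
proof -
  have Dw: "D w = D v" using a(3) unfolding df_def by simp
  have yW: "y \<in> worlds M" using mod_leqW[OF model a(4)] by blast
  have "C y \<in> D w" unfolding D_def using yW a(4) by blast
  then have "C y \<in> D v" using Dw by simp
  then obtain z where z: "z \<in> worlds M" "leq M z v" "C y = C z" unfolding D_def by blast
  have hz: "hg y = hg z" using C_hg[OF yW z(1) z(3)] .
  have "{C y' | y'. y' \<in> worlds M \<and> leq M y' w \<and> hg y \<le> hg y'} = {C z' | z'. z' \<in> worlds M \<and> leq M z' v \<and> hg z \<le> hg z'}"
  proof
    show "{C y' | y'. y' \<in> worlds M \<and> leq M y' w \<and> hg y \<le> hg y'} \<subseteq> {C z' | z'. z' \<in> worlds M \<and> leq M z' v \<and> hg z \<le> hg z'}"
    proof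
      fix c assume "c \<in> {C y' | y'. y' \<in> worlds M \<and> leq M y' w \<and> hg y \<le> hg y'}"
      then obtain y' where y': "y' \<in> worlds M" "leq M y' w" "hg y \<le> hg y'" "c = C y'" by blast
      have "C y' \<in> D v" using Dw y' unfolding D_def by blast
      then obtain z' where z': "z' \<in> worlds M" "leq M z' v" "C y' = C z'" unfolding D_def by blast
      have "hg y' = hg z'" using C_hg[OF y'(1) z'(1) z'(3)] .
      then have "hg z \<le> hg z'" using y'(3) hz by simp
      then show "c \<in> {C z' | z'. z' \<in> worlds M \<and> leq M z' v \<and> hg z \<le> hg z'}" using y'(4) z'(1,2,3) by blast
    qed
  next
    show "{C z' | z'. z' \<in> worlds M \<and> leq M z' v \<and> hg z \<le> hg z'} \<subseteq> {C y' | y'. y' \<in> worlds M \<and> leq M y' w \<and> hg y \<le> hg y'}"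
    proof
      fix c assume "c \<in> {C z' | z'. z' \<in> worlds M \<and> leq M z' v \<and> hg z \<le> hg z'}"
      then obtain z' where z': "z' \<in> worlds M" "leq M z' v" "hg z \<le> hg z'" "c = C z'" by blast
      have "C z' \<in> D w" using Dw z' unfolding D_def by blast
      then obtain y' where y': "y' \<in> worlds M" "leq M y' w" "C z' = C y'" unfolding D_def by blast
      have "hg z' = hg y'" using C_hg[OF z'(1) y'(1) y'(3)] .
      then have "hg y \<le> hg y'" using z'(3) hz by simp
      then show "c \<in> {C y' | y'. y' \<in> worlds M \<and> leq M y' w \<and> hg y \<le> hg y'}" using z'(4) y'(1,2,3) by blast
    qed
  qed
  then have "D y = D z" using D_below[OF F a(4)] D_below[OF F z(2)] by simp
  then show ?thesis using z(1,2) z(3) unfolding df_def by auto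
qed

end




lemma base_inst: assumes "is_model M" shows "base M (insert Bot (subs \<phi>))"
proof -
  have sub: "\<psi> \<in> insert Bot (subs \<phi>) \<Longrightarrow> \<psi> \<noteq> Bot \<Longrightarrow> subs \<psi> \<subseteq> subs \<phi>" for \<psi>
    using subs_trans by blast
  show ?thesis
  proof
    show "is_model M" by (rule assms)
    show "finite (insert Bot (subs \<phi>))" using subs_fin by simp
    show "Bot \<in> insert Bot (subs \<phi>)" by simp
  next
    fix a b assume "And a b \<in> insert Bot (subs \<phi>)"
    then have "subs (And a b) \<subseteq> subs \<phi>" using sub by blast
    then show "a \<in> insert Bot (subs \<phi>) \<and> b \<in> insert Bot (subs \<phi>)" using subs_self by auto
  next
    fix a b assume "Or a b \<in> insert Bot (subs \<phi>)"
    then have "subs (Or a b) \<subseteq> subs \<phi>" using sub by blast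
    then show "a \<in> insert Bot (subs \<phi>) \<and> b \<in> insert Bot (subs \<phi>)" using subs_self by auto
  next
    fix a b assume "Imp a b \<in> insert Bot (subs \<phi>)"
    then have "subs (Imp a b) \<subseteq> subs \<phi>" using sub by blast
    then show "a \<in> insert Bot (subs \<phi>) \<and> b \<in> insert Bot (subs \<phi>)" using subs_self by auto
  next
    fix a assume "Dia a \<in> insert Bot (subs \<phi>)"
    then have "subs (Dia a) \<subseteq> subs \<phi>" using sub by blast
    then show "a \<in> insert Bot (subs \<phi>)" using subs_self by auto
  next
    fix a assume "Box a \<in> insert Bot (subs \<phi>)"
    then have "subs (Box a) \<subseteq> subs \<phi>" using sub by blast
    then show "a \<in> insert Bot (subs \<phi>)" using subs_self by auto
  qed
qed

lemma hb_inst: assumes "shallow M" shows "\<exists>Hb. \<forall>w n. w \<in> worlds M \<longrightarrow> has_chain M w n \<longrightarrow> n \<le> Hb"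
proof -
  obtain Hb where Hb: "model_height M = enat Hb" using assms unfolding shallow_def by (cases "model_height M") auto
  have "n \<le> Hb" if "w \<in> worlds M" "has_chain M w n" for w n
  proof -
    have "enat n \<le> world_height M w" unfolding world_height_def using that(2) by (intro SUP_upper) simp
    also have "\<dots> \<le> model_height M" unfolding model_height_def using that(1) by (intro SUP_upper)
    finally show ?thesis using Hb by simp
  qed
  then show ?thesis by blast
qed

lemma lm_model: "logic_model L M \<Longrightarrow> is_model M"
  by (cases L) auto

lemma hbase_inst: assumes "is_model M" "shallow M" shows "\<exists>Hb. hbase M (insert Bot (subs \<phi>)) Hb"
proof -
  obtain Hb where Hb: "\<forall>w n. w \<in> worlds M \<longrightarrow> has_chain M w n \<longrightarrow> n \<le> Hb" using hb_inst[OF assms(2)] by blast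
  have "hbase M (insert Bot (subs \<phi>)) Hb"
    unfolding hbase_def hbase_axioms_def using base_inst[OF assms(1)] Hb by blast
  then show ?thesis by blast
qed

lemma part1:
  fixes M :: "'w model" and \<phi> :: fm
  assumes L: "L \<noteq> S4I" and LM: "logic_model L M" and sh: "shallow M"
  shows "\<exists>N :: nat model. logic_model L N \<and> finite (worlds N) \<and>
     (satisfiable_in M \<phi> \<longrightarrow> satisfiable_in N \<phi>) \<and> (falsifiable_in M \<phi> \<longrightarrow> falsifiable_in N \<phi>)"
proof -
  have mM: "is_model M" using lm_model[OF LM] .
  obtain Hb where H: "hbase M (insert Bot (subs \<phi>)) Hb" using hbase_inst[OF mM sh] by blast
  interpret H: hbase M "insert Bot (subs \<phi>)" Hb by (rule H)
  obtain g :: "'w set \<Rightarrow> nat" and n where g: "g ` (H.C ` worlds M) = {i. i < n}" "inj_on g (H.C ` worlds M)"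
    using finite_imp_inj_to_nat_seg[OF H.fin_C] by blast
  define d where "d = g \<circ> H.C"
  have dC: "d w = d v \<longleftrightarrow> H.C w = H.C v" if "w \<in> worlds M" "v \<in> worlds M" for w v
    unfolding d_def using g(2) that by (auto simp: inj_on_eq_iff)
  interpret Q: quot M "insert Bot (subs \<phi>)" d
  proof
    fix w v assume "w \<in> worlds M" "v \<in> worlds M" "d w = d v"
    then show "H.lab w = H.lab v" using dC H.C_lab by blast
  next
    fix w v x assume a: "w \<in> worlds M" "v \<in> worlds M" "d w = d v" "leq M w x"
    then obtain y where "y \<in> worlds M" "leq M v y" "H.C x = H.C y" using H.C_zig dC by blast
    moreover have "x \<in> worlds M" using mod_leqW[OF mM a(4)] by blast
    ultimately show "\<exists>y\<in>worlds M. leq M v y \<and> d x = d y" using dC by blast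
  qed
  have "finite (worlds Q.N)"
  proof -
    have "worlds Q.N = d ` worlds M" by (rule Q.N_simps(1))
    also have "\<dots> = g ` (H.C ` worlds M)" unfolding d_def by (simp add: image_comp)
    finally have "worlds Q.N = g ` (H.C ` worlds M)" .
    then show ?thesis using g(1) by simp
  qed
  moreover have "logic_model L Q.N" using Q.logicN[OF LM L] .
  moreover have "\<phi> \<in> insert Bot (subs \<phi>)" using subs_self by simp
  ultimately show ?thesis using Q.transfer by blast
qed

lemma part2:
  fixes M :: "'w model" and \<phi> :: fm
  assumes LM: "logic_model S4I M" and sh: "shallow M" and F: "forest_like M"
  shows "\<exists>N :: nat model. logic_model S4I N \<and> finite (worlds N) \<and>
     (satisfiable_in M \<phi> \<longrightarrow> satisfiable_in N \<phi>) \<and> (falsifiable_in M \<phi> \<longrightarrow> falsifiable_in N \<phi>)"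
proof -
  have mM: "is_model M" using lm_model[OF LM] .
  obtain Hb where H: "hbase M (insert Bot (subs \<phi>)) Hb" using hbase_inst[OF mM sh] by blast
  interpret H: hbase M "insert Bot (subs \<phi>)" Hb by (rule H)
  obtain g :: "'w set \<times> 'w set set \<Rightarrow> nat" and n where g: "g ` (H.df ` worlds M) = {i. i < n}" "inj_on g (H.df ` worlds M)"
    using finite_imp_inj_to_nat_seg[OF H.fin_df] by blast
  define d where "d = g \<circ> H.df"
  have dC: "d w = d v \<longleftrightarrow> H.df w = H.df v" if "w \<in> worlds M" "v \<in> worlds M" for w v
    unfolding d_def using g(2) that by (auto simp: inj_on_eq_iff)
  interpret Q: quot_zag M "insert Bot (subs \<phi>)" d
  proof
    fix w v assume "w \<in> worlds M" "v \<in> worlds M" "d w = d v"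
    then show "H.lab w = H.lab v" using dC H.df_lab by blast
  next
    fix w v x assume a: "w \<in> worlds M" "v \<in> worlds M" "d w = d v" "leq M w x"
    then obtain y where "y \<in> worlds M" "leq M v y" "H.df x = H.df y" using H.df_zig[OF F] dC by blast
    moreover have "x \<in> worlds M" using mod_leqW[OF mM a(4)] by blast
    ultimately show "\<exists>y\<in>worlds M. leq M v y \<and> d x = d y" using dC by blast
  next
    fix w v y assume a: "w \<in> worlds M" "v \<in> worlds M" "d w = d v" "leq M y w"
    then obtain z where "z \<in> worlds M" "leq M z v" "H.df y = H.df z" using H.df_zag[OF F] dC by blast
    moreover have "y \<in> worlds M" using mod_leqW[OF mM a(4)] by blast
    ultimately show "\<exists>z\<in>worlds M. leq M z v \<and> d y = d z" using dC by blast
  qed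
  have "finite (worlds Q.N)"
  proof -
    have "worlds Q.N = d ` worlds M" by (rule Q.N_simps(1))
    also have "\<dots> = g ` (H.df ` worlds M)" unfolding d_def by (simp add: image_comp)
    finally have "worlds Q.N = g ` (H.df ` worlds M)" .
    then show ?thesis using g(1) by simp
  qed
  moreover have "logic_model S4I Q.N" using Q.logicN_S4I[OF LM] .
  moreover have "\<phi> \<in> insert Bot (subs \<phi>)" using subs_self by simp
  ultimately show ?thesis using Q.transfer by blast
qed

theorem mainTheorem5:
  fixes L :: logic and \<phi> :: fm and M :: "'w model"
  shows
   "(L \<noteq> S4I \<and> logic_model L M \<and> shallow M \<longrightarrow>
       (satisfiable_in M \<phi> \<longrightarrow>
          (\<exists>N :: nat model. logic_model L N \<and> finite (worlds N) \<and> satisfiable_in N \<phi>)) \<and>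
       (falsifiable_in M \<phi> \<longrightarrow>
          (\<exists>N :: nat model. logic_model L N \<and> finite (worlds N) \<and> falsifiable_in N \<phi>)))
    \<and>
    (L = S4I \<and> logic_model S4I M \<and> shallow M \<and> forest_like M \<longrightarrow>
       (satisfiable_in M \<phi> \<longrightarrow>
          (\<exists>N :: nat model. logic_model S4I N \<and> finite (worlds N) \<and> satisfiable_in N \<phi>)) \<and>
       (falsifiable_in M \<phi> \<longrightarrow>
          (\<exists>N :: nat model. logic_model S4I N \<and> finite (worlds N) \<and> falsifiable_in N \<phi>)))"
proof (intro conjI impI)
  assume a: "L \<noteq> S4I \<and> logic_model L M \<and> shallow M"
  obtain N :: "nat model" where N: "logic_model L N" "finite (worlds N)"
      "satisfiable_in M \<phi> \<longrightarrow> satisfiable_in N \<phi>" "falsifiable_in M \<phi> \<longrightarrow> falsifiable_in N \<phi>"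
    using part1[of L M \<phi>] a by blast
  { assume "satisfiable_in M \<phi>"
    then show "\<exists>N :: nat model. logic_model L N \<and> finite (worlds N) \<and> satisfiable_in N \<phi>" using N by blast }
  { assume "falsifiable_in M \<phi>"
    then show "\<exists>N :: nat model. logic_model L N \<and> finite (worlds N) \<and> falsifiable_in N \<phi>" using N by blast }
next
  assume a: "L = S4I \<and> logic_model S4I M \<and> shallow M \<and> forest_like M"
  obtain N :: "nat model" where N: "logic_model S4I N" "finite (worlds N)"
      "satisfiable_in M \<phi> \<longrightarrow> satisfiable_in N \<phi>" "falsifiable_in M \<phi> \<longrightarrow> falsifiable_in N \<phi>"
    using part2[of M \<phi>] a by blast
  { assume "satisfiable_in M \<phi>"
    then show "\<exists>N :: nat model. logic_model S4I N \<and> finite (worlds N) \<and> satisfiable_in N \<phi>" using N by blast }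
  { assume "falsifiable_in M \<phi>"
    then show "\<exists>N :: nat model. logic_model S4I N \<and> finite (worlds N) \<and> falsifiable_in N \<phi>" using N by blast }
qed



end
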